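(* Let $X$ be a Banach lattice with a bibasis, and let $D\subseteq X$ be a subset whose linear span is dense in $X$. Then there exists a u-frame $(x_j,f_j)_{j=1}^\infty$ of $X$ such that $x_j\in D$ for all $j\in\mathbb{N}$.
   Context: In a Banach lattice $X$, a sequence $(y_n)$ converges uniformly to $y$ (written $y_n\xrightarrow{u}y$) if there is a positive vector $w\in X$ (a regulator) such that for every $\varepsilon>0$ there is $N$ with $|y-y_n|\le\varepsilon w$ for all $n\ge N$. A sequence of pairs $(x_j,f_j)_{j=1}^\infty$ in $X\times X^*$ is a Schauder frame of $X$ if $x=\sum_{j=1}^\infty f_j(x)x_j$ in norm for all $x\in X$; it is a u-frame if moreover $\sum_{j=1}^n f_j(x)x_j\xrightarrow{u}x$ for every $x\in X$. A Schauder basis $(x_j)$ of $X$ with biorthogonal functionals $(x_j^* )$ is a bibasis if $\sum_{j=1}^n x_j^*(x)x_j\xrightarrow{u}x$ for every $x\in X$. *)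

theory Defs
  imports "HOL-Analysis.Analysis"
begin

definition labs :: "'a::{lattice, uminus} \<Rightarrow> 'a" where
  "labs x = sup x (- x)"

class banach_lattice = banach + ordered_real_vector + lattice +
  assumes lattice_norm: "sup x (- x) \<le> sup y (- y) \<Longrightarrow> norm x \<le> norm y"

definition u_conv :: "(nat \<Rightarrow> 'a::banach_lattice) \<Rightarrow> 'a \<Rightarrow> bool" where
  "u_conv y x \<longleftrightarrow> (\<exists>w. 0 \<le> w \<and>
     (\<forall>\<epsilon>>0. \<exists>N. \<forall>n\<ge>N. labs (x - y n) \<le> \<epsilon> *\<^sub>R w))"

text \<open>Schauder frame (indices start at 0): f j in the dual X*, and
  x = sum_j f j x x_j in norm.\<close>
definition schauder_frame :: "(nat \<Rightarrow> 'a::banach_lattice) \<Rightarrow> (nat \<Rightarrow> 'a \<Rightarrow> real) \<Rightarrow> bool" where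
  "schauder_frame xs f \<longleftrightarrow> (\<forall>j. bounded_linear (f j)) \<and>
     (\<forall>x. (\<lambda>n. \<Sum>j<n. f j x *\<^sub>R xs j) \<longlonglongrightarrow> x)"

definition u_frame :: "(nat \<Rightarrow> 'a::banach_lattice) \<Rightarrow> (nat \<Rightarrow> 'a \<Rightarrow> real) \<Rightarrow> bool" where
  "u_frame xs f \<longleftrightarrow> schauder_frame xs f \<and>
     (\<forall>x. u_conv (\<lambda>n. \<Sum>j<n. f j x *\<^sub>R xs j) x)"

definition schauder_basis :: "(nat \<Rightarrow> 'a::banach_lattice) \<Rightarrow> bool" where
  "schauder_basis e \<longleftrightarrow> (\<forall>x. \<exists>!a. (\<lambda>n. \<Sum>j<n. a j *\<^sub>R e j) \<longlonglongrightarrow> x)"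

text \<open>Bibasis: the partial sums of the basis expansion (coefficients are the
  biorthogonal functionals) also converge uniformly.\<close>
definition bibasis :: "(nat \<Rightarrow> 'a::banach_lattice) \<Rightarrow> bool" where
  "bibasis e \<longleftrightarrow> schauder_basis e \<and>
     (\<forall>x a. (\<lambda>n. \<Sum>j<n. a j *\<^sub>R e j) \<longlonglongrightarrow> x \<longrightarrow>
        u_conv (\<lambda>n. \<Sum>j<n. a j *\<^sub>R e j) x)"

end

theory Submission
  imports Defs "HOL-Library.Lattice_Algebras"
begin

subclass (in banach_lattice) lattice_ab_group_add ..

lemma labs_nonneg: fixes x :: "'a::banach_lattice" shows "0 \<le> labs x"
proof -
  have "x + - x \<le> labs x + labs x" unfolding labs_def
    by (intro add_mono) auto
  then show ?thesis by simp
qed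

lemma labs_of_nonneg: fixes x :: "'a::banach_lattice" shows "0 \<le> x \<Longrightarrow> labs x = x"
  unfolding labs_def by (simp add: sup_absorb1 order_trans[of "-x" 0 x])

lemma labs_minus[simp]: fixes x :: "'a::banach_lattice" shows "labs (- x) = labs x"
  unfolding labs_def by (simp add: sup_commute)

lemma labs_diff_commute: fixes x :: "'a::banach_lattice" shows "labs (x - y) = labs (y - x)"
  by (metis labs_minus minus_diff_eq)

lemma labs_ge: fixes x :: "'a::banach_lattice" shows "x \<le> labs x" "- x \<le> labs x"
  unfolding labs_def by auto

lemma labs_le_iff: fixes x :: "'a::banach_lattice" shows "labs x \<le> w \<longleftrightarrow> x \<le> w \<and> - x \<le> w"
  unfolding labs_def by simp

lemma labs_triangle: fixes x :: "'a::banach_lattice" shows "labs (x + y) \<le> labs x + labs y"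
  unfolding labs_le_iff
  using add_mono[OF labs_ge(1)[of x] labs_ge(1)[of y]] add_mono[OF labs_ge(2)[of x] labs_ge(2)[of y]]
  by (auto simp: algebra_simps)

lemma labs_diff_triangle: fixes x :: "'a::banach_lattice" shows "labs (x - y) \<le> labs x + labs y"
  using labs_triangle[of x "-y"] by simp

lemma labs_scale_nonneg: fixes x :: "'a::banach_lattice"
  assumes "0 \<le> c" shows "labs (c *\<^sub>R x) = c *\<^sub>R labs x"
proof (cases "c = 0")
  case True then show ?thesis by (simp add: labs_def)
next
  case False
  then have c: "0 < c" using assms by simp
  have 1: "labs (c *\<^sub>R x) \<le> c *\<^sub>R labs x"
    unfolding labs_le_iff
    using scaleR_left_mono[OF labs_ge(1)[of x] assms] scaleR_left_mono[OF labs_ge(2)[of x] assms]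
    by auto
  have "labs ((1/c) *\<^sub>R (c *\<^sub>R x)) \<le> (1/c) *\<^sub>R labs (c *\<^sub>R x)"
    unfolding labs_le_iff
    using scaleR_left_mono[OF labs_ge(1)[of "c *\<^sub>R x"], of "1/c"] scaleR_left_mono[OF labs_ge(2)[of "c *\<^sub>R x"], of "1/c"] c
    by auto
  then have "labs x \<le> (1/c) *\<^sub>R labs (c *\<^sub>R x)" using c by simp
  then have "c *\<^sub>R labs x \<le> c *\<^sub>R ((1/c) *\<^sub>R labs (c *\<^sub>R x))"
    using scaleR_left_mono assms by blast
  then have "c *\<^sub>R labs x \<le> labs (c *\<^sub>R x)" using c by simp
  with 1 show ?thesis by (rule antisym)
qed

lemma labs_scale: fixes x :: "'a::banach_lattice"
  shows "labs (c *\<^sub>R x) = \<bar>c\<bar> *\<^sub>R labs x"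
proof (cases "0 \<le> c")
  case True then show ?thesis by (simp add: labs_scale_nonneg)
next
  case False
  have "labs (c *\<^sub>R x) = labs ((-c) *\<^sub>R x)" by (metis labs_minus scaleR_minus_left)
  also have "\<dots> = (-c) *\<^sub>R labs x" using False by (intro labs_scale_nonneg) simp
  finally show ?thesis using False by simp
qed

lemma labs_labs: fixes x :: "'a::banach_lattice" shows "labs (labs x) = labs x"
  by (simp add: labs_of_nonneg labs_nonneg)

lemma norm_labs[simp]: fixes x :: "'a::banach_lattice" shows "norm (labs x) = norm x"
proof -
  have a: "sup (labs x) (- labs x) = sup x (-x)" using labs_labs[of x] by (simp add: labs_def)
  show ?thesis using lattice_norm[of "labs x" x] lattice_norm[of x "labs x"] a by simp
qed

lemma norm_le_labs: fixes x :: "'a::banach_lattice"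
  assumes "labs x \<le> w" shows "norm x \<le> norm w"
proof -
  have "0 \<le> w" using labs_nonneg[of x] assms by (rule order_trans)
  then have "labs w = w" by (rule labs_of_nonneg)
  then have "sup x (-x) \<le> sup w (-w)" using assms by (simp add: labs_def)
  then show ?thesis by (rule lattice_norm)
qed

lemma norm_mono_nonneg: fixes x :: "'a::banach_lattice"
  assumes "0 \<le> x" "x \<le> w" shows "norm x \<le> norm w"
  using norm_le_labs[of x w] assms by (simp add: labs_of_nonneg)

lemma closed_cone: fixes s :: "nat \<Rightarrow> 'a::banach_lattice"
  assumes "eventually (\<lambda>n. 0 \<le> s n) sequentially" "s \<longlonglongrightarrow> l"
  shows "0 \<le> l"
proof -
  let ?m = "sup (-l) 0"
  have m0: "0 \<le> ?m" by simp
  have ev: "eventually (\<lambda>n. norm ?m \<le> norm (s n - l)) sequentially"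
    using assms(1)
  proof eventually_elim
    case (elim n)
    have "- l \<le> s n - l" using elim by simp
    also have "\<dots> \<le> labs (s n - l)" by (rule labs_ge)
    finally have "?m \<le> labs (s n - l)" using labs_nonneg by simp
    then have "labs ?m \<le> labs (s n - l)" using m0 by (simp add: labs_of_nonneg)
    then show ?case using norm_le_labs by fastforce
  qed
  have li: "(\<lambda>n. norm (s n - l)) \<longlonglongrightarrow> 0"
    using assms(2) by (simp add: LIM_zero_iff tendsto_norm_zero)
  have "norm ?m \<le> 0"
    using LIMSEQ_le_const[OF li] ev unfolding eventually_sequentially by blast
  then have "?m = 0" by simp
  moreover have "- l \<le> ?m" by (rule sup.cobounded1)
  ultimately have "- l \<le> 0" by simp
  then show ?thesis by simp
qed

lemma pos_le_suminf: fixes g :: "nat \<Rightarrow> 'a::banach_lattice"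
  assumes "\<And>n. 0 \<le> g n" "summable g"
  shows "g n \<le> suminf g"
proof -
  have "eventually (\<lambda>m. 0 \<le> (\<Sum>i<m. g i) - g n) sequentially"
    unfolding eventually_sequentially
  proof (intro exI allI impI)
    fix m assume "Suc n \<le> m"
    then have "n \<in> {..<m}" by simp
    then have "(\<Sum>i<m. g i) = g n + (\<Sum>i\<in>{..<m}-{n}. g i)"
      by (simp add: sum.remove)
    moreover have "0 \<le> (\<Sum>i\<in>{..<m}-{n}. g i)" by (rule sum_nonneg) (use assms in auto)
    ultimately show "0 \<le> (\<Sum>i<m. g i) - g n" by simp
  qed
  moreover have "(\<lambda>m. (\<Sum>i<m. g i) - g n) \<longlonglongrightarrow> suminf g - g n"
    by (intro tendsto_diff summable_LIMSEQ assms tendsto_const)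
  ultimately have "0 \<le> suminf g - g n" by (rule closed_cone)
  then show ?thesis by simp
qed

lemma labs_sum: fixes f :: "'b \<Rightarrow> 'a::banach_lattice"
  shows "labs (sum f A) \<le> (\<Sum>i\<in>A. labs (f i))"
proof (induction A rule: infinite_finite_induct)
  case (infinite A) then show ?case by (simp add: labs_def)
next
  case empty then show ?case by (simp add: labs_def)
next
  case (insert x F)
  then show ?case
    using order_trans[OF labs_triangle[of "f x" "sum f F"] add_left_mono[OF insert(3), of "labs (f x)"]]
    by simp
qed

lemma sum_nonneg_labs: fixes f :: "'b \<Rightarrow> 'a::banach_lattice"
  shows "0 \<le> (\<Sum>i\<in>A. labs (f i))"
  by (intro sum_nonneg labs_nonneg)

lemma u_conv_tendsto: fixes y :: "nat \<Rightarrow> 'a::banach_lattice"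
  assumes "u_conv y x" shows "y \<longlonglongrightarrow> x"
proof -
  obtain w where w: "0 \<le> w" "\<And>\<epsilon>. \<epsilon> > 0 \<Longrightarrow> \<exists>N. \<forall>n\<ge>N. labs (x - y n) \<le> \<epsilon> *\<^sub>R w"
    using assms unfolding u_conv_def by blast
  show ?thesis
  proof (rule LIMSEQ_I)
    fix r :: real assume r: "0 < r"
    define \<epsilon> where "\<epsilon> = r / (2 * (norm w + 1))"
    have \<epsilon>: "\<epsilon> > 0" using r unfolding \<epsilon>_def by (intro divide_pos_pos) (auto intro: add_nonneg_pos)
    obtain N where N: "\<forall>n\<ge>N. labs (x - y n) \<le> \<epsilon> *\<^sub>R w" using w(2)[OF \<epsilon>] by blast
    have "norm (y n - x) < r" if "n \<ge> N" for n
    proof -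
      have "norm (x - y n) \<le> norm (\<epsilon> *\<^sub>R w)" using N that norm_le_labs by blast
      also have "\<dots> = \<epsilon> * norm w" using \<epsilon> by simp
      also have "\<dots> < r"
      proof -
        have p: "0 < 2 * (norm w + 1)" by (simp add: add_nonneg_pos)
        have "norm w < 2 * (norm w + 1)" using norm_ge_zero[of w] by (smt (verit))
        then have q: "norm w / (2 * (norm w + 1)) < 1" using p by (simp add: divide_less_eq)
        have "\<epsilon> * norm w = r * (norm w / (2 * (norm w + 1)))" unfolding \<epsilon>_def by simp
        also have "\<dots> < r * 1" using q r by (intro mult_strict_left_mono) auto
        finally show ?thesis by simp
      qed
      finally show ?thesis by (simp add: norm_minus_commute)
    qed
    then show "\<exists>N. \<forall>n\<ge>N. norm (y n - x) < r" by blast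
  qed
qed

locale sbasis =
  fixes e :: "nat \<Rightarrow> 'a::banach_lattice"
  assumes sb: "schauder_basis e"
begin

definition coef :: "'a \<Rightarrow> nat \<Rightarrow> real" where
  "coef x = (THE a. (\<lambda>n. \<Sum>j<n. a j *\<^sub>R e j) \<longlonglongrightarrow> x)"

definition P :: "nat \<Rightarrow> 'a \<Rightarrow> 'a" where
  "P n x = (\<Sum>j<n. coef x j *\<^sub>R e j)"

lemma ex1: "\<exists>!a. (\<lambda>n. \<Sum>j<n. a j *\<^sub>R e j) \<longlonglongrightarrow> x"
  using sb unfolding schauder_basis_def by blast

lemma P_conv: "(\<lambda>n. P n x) \<longlonglongrightarrow> x"
  unfolding P_def coef_def by (rule theI'[OF ex1])

lemma coef_unique: "(\<lambda>n. \<Sum>j<n. a j *\<^sub>R e j) \<longlonglongrightarrow> x \<Longrightarrow> coef x = a"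
  unfolding coef_def by (rule the1_equality[OF ex1])

lemma coef_add: "coef (x + y) = (\<lambda>j. coef x j + coef y j)"
proof (rule coef_unique)
  show "(\<lambda>n. \<Sum>j<n. (coef x j + coef y j) *\<^sub>R e j) \<longlonglongrightarrow> x + y"
    using tendsto_add[OF P_conv[of x] P_conv[of y]]
    by (simp add: P_def scaleR_add_left sum.distrib)
qed

lemma coef_scale: "coef (c *\<^sub>R x) = (\<lambda>j. c * coef x j)"
proof (rule coef_unique)
  show "(\<lambda>n. \<Sum>j<n. (c * coef x j) *\<^sub>R e j) \<longlonglongrightarrow> c *\<^sub>R x"
    using tendsto_scaleR[OF tendsto_const[of c] P_conv[of x]]
    by (simp add: P_def scaleR_sum_right)
qed

lemma linear_coef: "linear (\<lambda>x. coef x j)"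
  by (rule linearI) (simp_all add: coef_add coef_scale)

lemma linear_P: "linear (P n)"
  unfolding P_def
  by (rule linearI) (simp_all add: coef_add coef_scale scaleR_add_left sum.distrib scaleR_sum_right)

lemma P_add: "P n (x + y) = P n x + P n y"
  using linear_P linear_add by blast
lemma P_scale: "P n (c *\<^sub>R x) = c *\<^sub>R P n x"
  using linear_P linear_scale by blast
lemma P_diff: "P n (x - y) = P n x - P n y"
  using linear_P linear_diff by blast

lemma P_Suc: "P (Suc n) x = P n x + coef x n *\<^sub>R e n"
  by (simp add: P_def)

lemma e_nonzero: "e j \<noteq> 0"
proof
  assume ej: "e j = 0"
  let ?a = "(\<lambda>_. 0::real)(j := 1)"
  have "(\<lambda>n. \<Sum>i<n. ?a i *\<^sub>R e i) = (\<lambda>n. 0)"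
    using ej by (intro ext sum.neutral) auto
  then have "coef 0 = ?a" by (intro coef_unique) simp
  moreover have "coef 0 = (\<lambda>_. 0)" by (intro coef_unique) simp
  ultimately show False by (metis fun_upd_same zero_neq_one)
qed

definition tn :: "'a \<Rightarrow> real" where
  "tn x = (SUP n. norm (P n x))"

lemma bdd_P: "bdd_above (range (\<lambda>n. norm (P n x)))"
proof -
  have "convergent (\<lambda>n. P n x)" using P_conv convergent_def by blast
  then have "Bseq (\<lambda>n. P n x)" by (rule convergent_imp_Bseq)
  then obtain K where "\<And>n. norm (P n x) \<le> K" unfolding Bseq_def by auto
  then show ?thesis by (intro bdd_aboveI2) auto
qed

lemma norm_P_le: "norm (P n x) \<le> tn x"
  unfolding tn_def by (rule cSUP_upper[OF _ bdd_P]) simp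

lemma tn_nonneg: "0 \<le> tn x"
  using norm_P_le[of 0 x] by (simp add: P_def)

lemma norm_le_tn: "norm x \<le> tn x"
proof -
  have "(\<lambda>n. norm (P n x)) \<longlonglongrightarrow> norm x" by (intro tendsto_norm P_conv)
  then show ?thesis by (rule LIMSEQ_le_const2) (auto intro: norm_P_le)
qed

lemma tn_le: "(\<And>n. norm (P n x) \<le> K) \<Longrightarrow> tn x \<le> K"
  unfolding tn_def by (rule cSUP_least) auto

lemma tn_add: "tn (x + y) \<le> tn x + tn y"
  by (rule tn_le) (auto simp: P_add intro!: order_trans[OF norm_triangle_ineq] add_mono norm_P_le)

lemma tn_diff: "tn (x - y) \<le> tn x + tn y"
  by (rule tn_le) (auto simp: P_diff intro!: order_trans[OF norm_triangle_ineq4] add_mono norm_P_le)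

lemma tn_scale: "tn (c *\<^sub>R x) = \<bar>c\<bar> * tn x"
proof (rule antisym)
  show "tn (c *\<^sub>R x) \<le> \<bar>c\<bar> * tn x"
    by (rule tn_le) (auto simp: P_scale intro!: mult_left_mono norm_P_le)
next
  show "\<bar>c\<bar> * tn x \<le> tn (c *\<^sub>R x)"
  proof (cases "c = 0")
    case True then show ?thesis by (simp add: tn_nonneg)
  next
    case False
    have "tn x \<le> tn (c *\<^sub>R x) / \<bar>c\<bar>"
    proof (rule tn_le)
      fix n
      have "norm (P n (c *\<^sub>R x)) \<le> tn (c *\<^sub>R x)" by (rule norm_P_le)
      then have "\<bar>c\<bar> * norm (P n x) \<le> tn (c *\<^sub>R x)" by (simp add: P_scale)
      then show "norm (P n x) \<le> tn (c *\<^sub>R x) / \<bar>c\<bar>" using False by (simp add: field_simps)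
    qed
    then show ?thesis using False by (simp add: field_simps)
  qed
qed

lemma coef_le_tn: "\<bar>coef x j\<bar> * norm (e j) \<le> 2 * tn x"
proof -
  have "coef x j *\<^sub>R e j = P (Suc j) x - P j x" by (simp add: P_Suc)
  then have "\<bar>coef x j\<bar> * norm (e j) = norm (P (Suc j) x - P j x)" by (metis norm_scaleR)
  also have "\<dots> \<le> norm (P (Suc j) x) + norm (P j x)" by (rule norm_triangle_ineq4)
  also have "\<dots> \<le> 2 * tn x" using norm_P_le[of "Suc j" x] norm_P_le[of j x] by simp
  finally show ?thesis .
qed

lemma norm_le_tn_summable:
  assumes "summable (\<lambda>i. tn (y i))"
  shows "summable (\<lambda>i. norm (y i))"
  by (rule summable_comparison_test'[OF assms]) (simp add: norm_le_tn)

lemma KL: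
  assumes sm: "summable (\<lambda>i. tn (y i))"
  shows "y sums (suminf y) \<and> tn (suminf y) \<le> (\<Sum>i. tn (y i))"
proof -
  have sn: "summable (\<lambda>i. norm (y i))" by (rule norm_le_tn_summable[OF sm])
  then have sy: "summable y" by (rule summable_norm_cancel)
  define s where "s = suminf y"
  have ys: "y sums s" unfolding s_def using sy by (simp add: summable_sums)
  define a where "a j = (\<Sum>i. coef (y i) j)" for j
  have sc: "summable (\<lambda>i. coef (y i) j)" for j
  proof (rule summable_comparison_test')
    show "summable (\<lambda>i. 2 * tn (y i) / norm (e j))"
      using sm by (intro summable_divide summable_mult)
    fix i
    show "norm (coef (y i) j) \<le> 2 * tn (y i) / norm (e j)"
      using coef_le_tn[of "y i" j] e_nonzero[of j] by (simp add: field_simps)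
  qed
  define Q where "Q n = (\<Sum>j<n. a j *\<^sub>R e j)" for n
  have PQ: "(\<lambda>i. P n (y i)) sums Q n" for n
    unfolding P_def Q_def
    by (intro sums_sum sums_scaleR_left) (simp add: a_def summable_sums sc)
  have sPn: "summable (\<lambda>i. norm (P n (y i)))" for n
    by (rule summable_comparison_test'[OF sm]) (simp add: norm_P_le)
  have Qb: "norm (Q n) \<le> (\<Sum>i. tn (y i))" for n
  proof -
    have "Q n = (\<Sum>i. P n (y i))" using PQ[of n] by (simp add: sums_iff)
    then have "norm (Q n) \<le> (\<Sum>i. norm (P n (y i)))" using summable_norm[OF sPn] by simp
    also have "\<dots> \<le> (\<Sum>i. tn (y i))" by (intro suminf_le sPn sm norm_P_le)
    finally show ?thesis .
  qed
  have lim0: "(\<lambda>n. (\<Sum>i. norm (P n (y i) - y i))) \<longlonglongrightarrow> (\<Sum>i. (0::real))"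
  proof -
    have "eventually (\<lambda>n. summable (\<lambda>k. norm (norm (P n (y k) - y k)))) sequentially \<and>
           summable (\<lambda>n. norm (0::real)) \<and>
           ((\<lambda>n. suminf (\<lambda>k. norm (P n (y k) - y k))) \<longlongrightarrow> suminf (\<lambda>_. 0::real)) sequentially"
    proof (rule tannerys_theorem[where M = "\<lambda>k. 2 * tn (y k)"])
      fix k
      show "(\<lambda>n. norm (P n (y k) - y k)) \<longlonglongrightarrow> 0"
        using P_conv[of "y k"] by (simp add: LIM_zero_iff tendsto_norm_zero)
    next
      show "summable (\<lambda>k. 2 * tn (y k))" using sm by (rule summable_mult)
    next
      show "\<forall>\<^sub>F (k, n) in at_top \<times>\<^sub>F sequentially. norm (norm (P n (y k) - y k)) \<le> 2 * tn (y k)"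
      proof (rule always_eventually, clarify)
        fix k n
        have "norm (P n (y k) - y k) \<le> norm (P n (y k)) + norm (y k)" by (rule norm_triangle_ineq4)
        also have "\<dots> \<le> 2 * tn (y k)" using norm_P_le[of n "y k"] norm_le_tn[of "y k"] by simp
        finally show "norm (norm (P n (y k) - y k)) \<le> 2 * tn (y k)" by simp
      qed
    qed simp
    then show ?thesis by simp
  qed
  have QS: "Q \<longlonglongrightarrow> s"
  proof -
    have snd: "summable (\<lambda>i. norm (P n (y i) - y i))" for n
      by (rule summable_comparison_test'[where g = "\<lambda>i. norm (P n (y i)) + norm (y i)"])
         (auto intro!: summable_add sPn sn simp: norm_triangle_ineq4)
    have eq: "Q n - s = (\<Sum>i. P n (y i) - y i)" for n
      using sums_diff[OF PQ[of n] ys] by (simp add: sums_iff)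
    have b: "norm (Q n - s) \<le> (\<Sum>i. norm (P n (y i) - y i))" for n
      unfolding eq by (rule summable_norm[OF snd])
    have l: "(\<lambda>n. (\<Sum>i. norm (P n (y i) - y i))) \<longlonglongrightarrow> 0" using lim0 by simp
    have "(\<lambda>n. Q n - s) \<longlonglongrightarrow> 0"
      by (rule Lim_null_comparison[OF always_eventually[OF allI[OF b]] l])
    then show ?thesis by (simp add: LIM_zero_iff)
  qed
  then have "coef s = a" unfolding Q_def by (rule coef_unique)
  then have "P n s = Q n" for n by (simp add: P_def Q_def)
  then have "tn s \<le> (\<Sum>i. tn (y i))" by (intro tn_le) (simp add: Qb)
  then show ?thesis using ys s_def by simp
qed

end

context sbasis
begin

lemma baire_step: "\<exists>m x0 r. r > 0 \<and> ball x0 r \<subseteq> closure {x. tn x \<le> real m}"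
proof (rule ccontr)
  assume H: "\<not> ?thesis"
  have H': "\<not> (r > 0 \<and> ball x0 r \<subseteq> closure {x. tn x \<le> real m})" for m x0 r
    using H by blast
  define G where "G = range (\<lambda>m::nat. closure {x. tn x \<le> real m})"
  have "euclidean interior_of \<Union>G = {}"
  proof (rule Baire_category_alt)
    show "completely_metrizable_space (euclidean::'a topology) \<or>
      locally_compact_space (euclidean::'a topology) \<and> regular_space (euclidean::'a topology)"
      using completely_metrizable_space_euclidean by blast
    show "countable G" unfolding G_def by simp
    fix T assume "T \<in> G"
    then obtain m where T: "T = closure {x. tn x \<le> real m}" unfolding G_def by blast
    show "closedin euclidean T \<and> euclidean interior_of T = {}"
    proof
      show "closedin euclidean T" unfolding T by simp
      show "euclidean interior_of T = {}"
      proof (rule ccontr)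
        assume "euclidean interior_of T \<noteq> {}"
        then obtain z where "z \<in> euclidean interior_of T" by blast
        then obtain U where "openin euclidean U" "z \<in> U" "U \<subseteq> T"
          unfolding interior_of_def by blast
        then have "open U" by simp
        then obtain r where r: "r > 0" "ball z r \<subseteq> U" using \<open>z \<in> U\<close> by (meson open_contains_ball)
        have "ball z r \<subseteq> T" using r(2) \<open>U \<subseteq> T\<close> by (rule order_trans)
        then show False using H'[of r z m] r T by simp
      qed
    qed
  qed
  moreover have "\<Union>G = UNIV"
  proof -
    have "x \<in> \<Union>G" for x
    proof (rule UnionI)
      show "closure {y. tn y \<le> real (nat \<lceil>tn x\<rceil>)} \<in> G" unfolding G_def by (rule rangeI)
      show "x \<in> closure {y. tn y \<le> real (nat \<lceil>tn x\<rceil>)}"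
        by (rule closure_subset[THEN subsetD]) (simp add: real_nat_ceiling_ge)
    qed
    then show ?thesis by auto
  qed
  ultimately show False by (simp add: interior_of_openin)
qed

lemma approx_exists: "\<exists>K\<ge>0. \<forall>z. \<exists>u. tn u \<le> K * norm z \<and> norm (z - u) \<le> norm z / 2"
proof -
  obtain m x0 r where r: "r > 0" and B: "ball x0 r \<subseteq> closure {x. tn x \<le> real m}"
    using baire_step by blast
  have ap: "\<exists>u. tn u \<le> 2 * real m \<and> norm (z - u) < \<delta>" if z: "norm z < r" and d: "\<delta> > 0" for z \<delta>
  proof -
    have d2: "\<delta>/2 > 0" using d by simp
    have "x0 + z \<in> ball x0 r" using z by (simp add: dist_norm)
    then have "x0 + z \<in> closure {x. tn x \<le> real m}" using B by (rule subsetD[rotated])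
    then have "\<exists>y\<in>{x. tn x \<le> real m}. dist y (x0 + z) < \<delta>/2"
      unfolding closure_approachable using d2 by blast
    then obtain u1 where u1: "tn u1 \<le> real m" "dist u1 (x0 + z) < \<delta>/2" by blast
    have "x0 \<in> ball x0 r" using r by simp
    then have "x0 \<in> closure {x. tn x \<le> real m}" using B by (rule subsetD[rotated])
    then have "\<exists>y\<in>{x. tn x \<le> real m}. dist y x0 < \<delta>/2"
      unfolding closure_approachable using d2 by blast
    then obtain u2 where u2: "tn u2 \<le> real m" "dist u2 x0 < \<delta>/2" by blast
    have "tn (u1 - u2) \<le> 2 * real m" using tn_diff[of u1 u2] u1(1) u2(1) by linarith
    moreover have "norm (z - (u1 - u2)) < \<delta>"
    proof -
      have "z - (u1 - u2) = (x0 + z - u1) - (x0 - u2)" by (simp add: algebra_simps)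
      then have "norm (z - (u1 - u2)) \<le> norm (x0 + z - u1) + norm (x0 - u2)"
        by (metis norm_triangle_ineq4)
      moreover have "norm (x0 + z - u1) = dist u1 (x0 + z)" by (simp add: dist_norm norm_minus_commute)
      moreover have "norm (x0 - u2) = dist u2 x0" by (simp add: dist_norm norm_minus_commute)
      ultimately show ?thesis using u1(2) u2(2) by linarith
    qed
    ultimately show ?thesis by blast
  qed
  define K where "K = 4 * real m / r"
  have K0: "0 \<le> K" using r by (simp add: K_def)
  have "\<exists>u. tn u \<le> K * norm z \<and> norm (z - u) \<le> norm z / 2" for z
  proof (cases "z = 0")
    case True
    have "tn 0 = 0" using tn_scale[of 0 0] by simp
    then show ?thesis using True by (intro exI[of _ 0]) simp
  next
    case False
    define t where "t = 2 * norm z / r"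
    have t: "t > 0" using False r by (simp add: t_def)
    define z' where "z' = (1/t) *\<^sub>R z"
    have nz': "norm z' = r / 2" using t r False by (simp add: z'_def t_def)
    have "norm z' < r" "r / 4 > 0" using nz' r by auto
    from ap[OF this] obtain u' where u': "tn u' \<le> 2 * real m" "norm (z' - u') < r / 4"
      by blast
    define u where "u = t *\<^sub>R u'"
    have "tn u = t * tn u'" using t by (simp add: u_def tn_scale)
    also have "\<dots> \<le> t * (2 * real m)" using t u' by simp
    also have "\<dots> = K * norm z" using r by (simp add: t_def K_def field_simps)
    finally have 1: "tn u \<le> K * norm z" .
    have "z - u = t *\<^sub>R (z' - u')" using t by (simp add: u_def z'_def algebra_simps)
    then have "norm (z - u) = t * norm (z' - u')" using t by simp
    also have "\<dots> \<le> t * (r / 4)" using t u' by simp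
    also have "\<dots> = norm z / 2" using r by (simp add: t_def)
    finally show ?thesis using 1 by blast
  qed
  then show ?thesis using K0 by blast
qed

lemma tn_bound: "\<exists>M. \<forall>x. tn x \<le> M * norm x"
proof -
  obtain K where K0: "0 \<le> K" and K: "\<And>z. \<exists>u. tn u \<le> K * norm z \<and> norm (z - u) \<le> norm z / 2"
    using approx_exists by blast
  define pick where "pick z = (SOME u. tn u \<le> K * norm z \<and> norm (z - u) \<le> norm z / 2)" for z
  have pick: "tn (pick z) \<le> K * norm z \<and> norm (z - pick z) \<le> norm z / 2" for z
    unfolding pick_def by (rule someI_ex[OF K[of z]])
  have "tn x \<le> (2 * K) * norm x" for x
  proof -
    define zs where "zs i = ((\<lambda>z. z - pick z) ^^ i) x" for i
    define us where "us i = pick (zs i)" for i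
    have zS: "zs (Suc i) = zs i - us i" for i by (simp add: zs_def us_def)
    have z0: "zs 0 = x" by (simp add: zs_def)
    have zn: "norm (zs i) \<le> (1/2)^i * norm x" for i
    proof (induction i)
      case 0 then show ?case by (simp add: z0)
    next
      case (Suc i)
      have "norm (zs (Suc i)) \<le> norm (zs i) / 2" unfolding zS us_def using pick[of "zs i"] by blast
      also have "\<dots> \<le> (1/2)^(Suc i) * norm x" using Suc by simp
      finally show ?case .
    qed
    have tu: "tn (us i) \<le> K * ((1/2)^i * norm x)" for i
    proof -
      have "tn (us i) \<le> K * norm (zs i)" unfolding us_def using pick[of "zs i"] by blast
      also have "\<dots> \<le> K * ((1/2)^i * norm x)" by (rule mult_left_mono[OF zn K0])
      finally show ?thesis .
    qed
    have sg: "summable (\<lambda>i. K * ((1/2)^i * norm x))"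
      by (intro summable_mult summable_mult2 summable_geometric) simp
    have st: "summable (\<lambda>i. tn (us i))"
    proof (rule summable_comparison_test'[OF sg])
      fix i
      show "norm (tn (us i)) \<le> K * ((1/2)^i * norm x)" using tu[of i] tn_nonneg[of "us i"] by simp
    qed
    have psum: "(\<Sum>i<n. us i) = x - zs n" for n
      by (induction n) (simp_all add: z0 zS)
    have "zs \<longlonglongrightarrow> 0"
    proof -
      have "(\<lambda>i. (1/2::real)^i * norm x) \<longlonglongrightarrow> 0 * norm x"
        by (intro tendsto_mult LIMSEQ_power_zero tendsto_const) simp
      then have l: "(\<lambda>i. (1/2::real)^i * norm x) \<longlonglongrightarrow> 0" by simp
      show ?thesis
        by (rule Lim_null_comparison[OF always_eventually[OF allI[OF zn]] l])
    qed
    then have "(\<lambda>n. x - zs n) \<longlonglongrightarrow> x - 0" by (intro tendsto_diff tendsto_const)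
    then have us: "us sums x" unfolding sums_def psum by simp
    from KL[OF st] have "tn (suminf us) \<le> (\<Sum>i. tn (us i))" by blast
    also have "\<dots> \<le> (\<Sum>i. K * ((1/2)^i * norm x))" by (intro suminf_le st sg tu)
    also have "\<dots> = K * (2 * norm x)"
    proof -
      have "(\<Sum>i. (1/2::real)^i) = 2" using suminf_geometric[of "1/2::real"] by simp
      moreover have "summable (\<lambda>i. (1/2::real)^i)" by (rule summable_geometric) simp
      then have s2: "summable (\<lambda>i. (1/2::real)^i * norm x)" by (rule summable_mult2)
      have e1: "(\<Sum>i. K * ((1/2)^i * norm x)) = K * (\<Sum>i. (1/2)^i * norm x)"
        by (rule suminf_mult[OF s2])
      have e2: "(\<Sum>i. (1/2::real)^i * norm x) = (\<Sum>i. (1/2::real)^i) * norm x"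
        by (rule suminf_mult2[OF \<open>summable (\<lambda>i. (1/2::real)^i)\<close>, symmetric])
      show ?thesis unfolding e1 e2 \<open>(\<Sum>i. (1/2::real)^i) = 2\<close> by simp
    qed
    finally show ?thesis using us by (simp add: sums_iff)
  qed
  then show ?thesis by blast
qed


lemma tn_bound0: "\<exists>M\<ge>0. \<forall>x. tn x \<le> M * norm x"
proof -
  obtain M where M: "\<And>x. tn x \<le> M * norm x" using tn_bound by blast
  have "tn x \<le> max M 0 * norm x" for x
    using M[of x] mult_right_mono[of M "max M 0" "norm x"] by simp
  then show ?thesis by (intro exI[of _ "max M 0"]) auto
qed

lemma coef_bound: "\<exists>C. \<forall>j. C j > 0 \<and> (\<forall>x. \<bar>coef x j\<bar> \<le> C j * norm x)"
proof -
  obtain M where M0: "M \<ge> 0" and M: "\<And>x. tn x \<le> M * norm x" using tn_bound0 by blast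
  define C where "C j = 2 * M / norm (e j) + 1" for j
  have "C j > 0" for j using M0 by (simp add: C_def add_nonneg_pos)
  moreover have "\<bar>coef x j\<bar> \<le> C j * norm x" for x j
  proof -
    have ne: "norm (e j) > 0" using e_nonzero by simp
    have "\<bar>coef x j\<bar> * norm (e j) \<le> 2 * M * norm x" using coef_le_tn[of x j] M[of x] by linarith
    then have "\<bar>coef x j\<bar> \<le> 2 * M * norm x / norm (e j)" using ne by (simp add: field_simps)
    also have "\<dots> \<le> C j * norm x" using ne by (simp add: C_def field_simps)
    finally show ?thesis .
  qed
  ultimately show ?thesis by blast
qed

lemma bounded_linear_coef: "bounded_linear (\<lambda>x. coef x j)"
proof -
  obtain C where C: "\<And>j. C j > 0" "\<And>j x. \<bar>coef x j\<bar> \<le> C j * norm x" using coef_bound by blast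
  show ?thesis
    by (rule bounded_linear_intro[where K = "C j"]) (auto simp: coef_add coef_scale C(2) mult.commute)
qed

lemma bounded_linear_P: "bounded_linear (P n)"
proof -
  obtain M where M0: "M \<ge> 0" and M: "\<And>x. tn x \<le> M * norm x" using tn_bound0 by blast
  show ?thesis
  proof (rule bounded_linear_intro[where K = M])
    fix x show "norm (P n x) \<le> norm x * M" using norm_P_le[of n x] M[of x] by (simp add: mult.commute)
  qed (simp_all add: P_add P_scale)
qed

end

lemma sum_lessThan_add: "(\<Sum>i<m+n. f i) = (\<Sum>i<m. f i) + (\<Sum>i<n. f (m+i))"
  for f :: "nat \<Rightarrow> 'b::comm_monoid_add"
  by (induction n) (simp_all add: add.assoc)

locale fdata = sbasis e for e :: "nat \<Rightarrow> 'a::banach_lattice" +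
  fixes C :: "nat \<Rightarrow> real" and v :: "nat \<Rightarrow> 'a" and L :: "nat \<Rightarrow> nat"
    and a :: "nat \<Rightarrow> nat \<Rightarrow> real" and d :: "nat \<Rightarrow> nat \<Rightarrow> 'a" and N :: "nat \<Rightarrow> nat"
  assumes C_pos: "C k > 0"
    and C_bd: "\<bar>coef x k\<bar> \<le> C k * norm x"
    and L_pos: "L k \<ge> 1" and N_pos: "N k \<ge> 1"
    and v_eq: "v k = (\<Sum>i<L k. a k i *\<^sub>R d k i)"
    and v_close: "C k * norm (e k - v k) \<le> (1/4)^(Suc k)"
    and N_big: "C k * norm (\<Sum>i<L k. \<bar>a k i\<bar> *\<^sub>R labs (d k i)) \<le> real (N k) * (1/4)^k"
begin

definition Bk :: "nat \<Rightarrow> 'a" where "Bk k = (\<Sum>i<L k. \<bar>a k i\<bar> *\<^sub>R labs (d k i))"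

lemma Bk_nonneg: "0 \<le> Bk k"
  unfolding Bk_def by (intro sum_nonneg scaleR_nonneg_nonneg labs_nonneg) auto

lemma Bk_ge: "m \<le> L k \<Longrightarrow> labs (\<Sum>i<m. a k i *\<^sub>R d k i) \<le> Bk k"
proof -
  assume m: "m \<le> L k"
  have "labs (\<Sum>i<m. a k i *\<^sub>R d k i) \<le> (\<Sum>i<m. labs (a k i *\<^sub>R d k i))" by (rule labs_sum)
  also have "\<dots> = (\<Sum>i<m. \<bar>a k i\<bar> *\<^sub>R labs (d k i))" by (simp add: labs_scale)
  also have "\<dots> \<le> Bk k" unfolding Bk_def
    by (rule sum_mono2) (use m in \<open>auto intro: scaleR_nonneg_nonneg labs_nonneg\<close>)
  finally show ?thesis .
qed

definition rho :: "nat \<Rightarrow> real" where "rho k = C k * norm (e k - v k)"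

lemma rho_nonneg: "0 \<le> rho k" using C_pos[of k] by (simp add: rho_def)

lemma rho_le: "rho k \<le> (1/4)^(Suc k)" unfolding rho_def by (rule v_close)

lemma summable_rho: "summable rho"
proof (rule summable_comparison_test'[where g = "\<lambda>k. (1/4::real)^(Suc k)"])
  show "summable (\<lambda>k. (1/4::real)^(Suc k))" by (simp add: summable_geometric)
  fix n show "norm (rho n) \<le> (1/4)^(Suc n)" using rho_nonneg[of n] rho_le[of n] by simp
qed

lemma term_bd: "norm (coef y k *\<^sub>R (e k - v k)) \<le> rho k * norm y"
proof -
  have "norm (coef y k *\<^sub>R (e k - v k)) = \<bar>coef y k\<bar> * norm (e k - v k)" by simp
  also have "\<dots> \<le> (C k * norm y) * norm (e k - v k)" by (intro mult_right_mono C_bd) simp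
  also have "\<dots> = rho k * norm y" by (simp add: rho_def)
  finally show ?thesis .
qed

lemma summable_Rterm: "summable (\<lambda>k. norm (coef y k *\<^sub>R (e k - v k)))"
proof (rule summable_comparison_test'[where g = "\<lambda>k. rho k * norm y"])
  show "summable (\<lambda>k. rho k * norm y)" by (intro summable_mult2 summable_rho)
  fix n show "norm (norm (coef y n *\<^sub>R (e n - v n))) \<le> rho n * norm y"
    using term_bd[of y n] by simp
qed

lemma summable_Rterm': "summable (\<lambda>k. coef y k *\<^sub>R (e k - v k))"
  by (rule summable_norm_cancel[OF summable_Rterm])

definition R :: "'a \<Rightarrow> 'a" where "R y = (\<Sum>k. coef y k *\<^sub>R (e k - v k))"

lemma rho_tail: "(\<Sum>k. rho (k + K)) \<le> (1/4)^K"
proof -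
  have s: "summable (\<lambda>k. (1/4::real)^(Suc (k + K)))" by (simp add: summable_geometric)
  have "(\<Sum>k. rho (k + K)) \<le> (\<Sum>k. (1/4::real)^(Suc (k + K)))"
    by (intro suminf_le s rho_le) (simp add: summable_rho summable_ignore_initial_segment)
  also have "(\<Sum>k. (1/4::real)^(Suc (k + K))) = (1/4)^(Suc K) * (\<Sum>k. (1/4::real)^k)"
    by (subst suminf_mult[symmetric]) (simp_all add: summable_geometric power_add mult.commute)
  also have "\<dots> = (1/4)^(Suc K) * (4/3)" using suminf_geometric[of "1/4::real"] by simp
  also have "\<dots> \<le> (1/4)^K" by simp
  finally show ?thesis .
qed

definition tR :: "'a \<Rightarrow> nat \<Rightarrow> 'a" where "tR y K = (\<Sum>k. coef y (k + K) *\<^sub>R (e (k + K) - v (k + K)))"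

lemma tR_split: "R y = tR y K + (\<Sum>k<K. coef y k *\<^sub>R (e k - v k))"
  unfolding R_def tR_def by (rule suminf_split_initial_segment[OF summable_Rterm'])

lemma norm_tR: "norm (tR y K) \<le> (1/4)^K * norm y"
proof -
  have s1: "summable (\<lambda>k. norm (coef y (k + K) *\<^sub>R (e (k + K) - v (k + K))))"
    using summable_Rterm[of y] by (rule summable_ignore_initial_segment)
  have s2: "summable (\<lambda>k. rho (k + K) * norm y)"
    by (intro summable_mult2 summable_ignore_initial_segment summable_rho)
  have "norm (tR y K) \<le> (\<Sum>k. norm (coef y (k + K) *\<^sub>R (e (k + K) - v (k + K))))"
    unfolding tR_def by (rule summable_norm[OF s1])
  also have "\<dots> \<le> (\<Sum>k. rho (k + K) * norm y)" by (intro suminf_le s1 s2 term_bd)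
  also have "\<dots> = (\<Sum>k. rho (k + K)) * norm y"
    by (rule suminf_mult2[symmetric]) (intro summable_ignore_initial_segment summable_rho)
  also have "\<dots> \<le> (1/4)^K * norm y" by (intro mult_right_mono rho_tail) simp
  finally show ?thesis .
qed

end

context fdata
begin

lemma norm_R: "norm (R y) \<le> norm y / 2"
proof -
  have sr: "summable (\<lambda>k. rho k * norm y)" by (intro summable_mult2 summable_rho)
  have "norm (R y) \<le> (\<Sum>k. norm (coef y k *\<^sub>R (e k - v k)))"
    unfolding R_def by (rule summable_norm[OF summable_Rterm])
  also have "\<dots> \<le> (\<Sum>k. rho k * norm y)" by (intro suminf_le summable_Rterm sr term_bd)
  also have "\<dots> = (\<Sum>k. rho k) * norm y" by (rule suminf_mult2[symmetric]) (rule summable_rho)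
  also have "\<dots> \<le> (1/2) * norm y"
  proof (rule mult_right_mono)
    have g: "summable (\<lambda>k. (1/4::real)^(Suc k))" by (simp add: summable_geometric)
    have "(\<Sum>k. rho k) \<le> (\<Sum>k. (1/4::real)^(Suc k))" by (intro suminf_le summable_rho g rho_le)
    also have "(\<Sum>k. (1/4::real)^(Suc k)) = (1/4) * (\<Sum>k. (1/4::real)^k)"
      by (subst suminf_mult[symmetric]) (simp_all add: summable_geometric)
    also have "\<dots> = 1/3" using suminf_geometric[of "1/4::real"] by simp
    finally show "(\<Sum>k. rho k) \<le> 1/2" by simp
  qed simp
  finally show ?thesis by simp
qed

lemma R_add: "R (x + y) = R x + R y"
  unfolding R_def
  by (subst suminf_add[OF summable_Rterm' summable_Rterm'])
     (simp add: coef_add scaleR_add_left)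

lemma R_scale: "R (c *\<^sub>R x) = c *\<^sub>R R x"
proof -
  have "c *\<^sub>R R x = (\<Sum>k. c *\<^sub>R (coef x k *\<^sub>R (e k - v k)))"
    unfolding R_def by (rule suminf_scaleR_right[OF summable_Rterm'])
  then show ?thesis by (simp add: R_def coef_scale)
qed

lemma bl_R: "bounded_linear R"
proof (rule bounded_linear_intro[where K = "1/2"])
  fix x show "norm (R x) \<le> norm x * (1/2)" using norm_R[of x] by simp
qed (auto simp: R_add R_scale)

lemma bl_Rp: "bounded_linear (R ^^ p)"
  by (induction p) (simp_all add: bounded_linear_ident bounded_linear_compose[OF bl_R])

lemma norm_Rp: "norm ((R ^^ p) x) \<le> (1/2)^p * norm x"
proof (induction p)
  case 0 then show ?case by simp
next
  case (Suc p)
  have "norm ((R ^^ Suc p) x) = norm (R ((R ^^ p) x))" by simp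
  also have "\<dots> \<le> norm ((R ^^ p) x) / 2" by (rule norm_R)
  also have "\<dots> \<le> (1/2)^(Suc p) * norm x" using Suc by simp
  finally show ?case .
qed

lemma summable_Rp_norm: "summable (\<lambda>p. norm ((R ^^ p) x))"
proof (rule summable_comparison_test'[where g = "\<lambda>p. (1/2::real)^p * norm x"])
  show "summable (\<lambda>p. (1/2::real)^p * norm x)" by (intro summable_mult2 summable_geometric) simp
  fix n show "norm (norm ((R ^^ n) x)) \<le> (1/2)^n * norm x" using norm_Rp[of n x] by simp
qed

lemma summable_Rp: "summable (\<lambda>p. (R ^^ p) x)"
  by (rule summable_norm_cancel[OF summable_Rp_norm])

definition S :: "'a \<Rightarrow> 'a" where "S x = (\<Sum>p. (R ^^ p) x)"

lemma S_add: "S (x + y) = S x + S y"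
  unfolding S_def
  by (subst suminf_add[OF summable_Rp summable_Rp])
     (simp add: linear_add[OF bounded_linear.linear[OF bl_Rp]])

lemma S_scale: "S (c *\<^sub>R x) = c *\<^sub>R S x"
proof -
  have "c *\<^sub>R S x = (\<Sum>p. c *\<^sub>R (R ^^ p) x)"
    unfolding S_def by (rule suminf_scaleR_right[OF summable_Rp])
  then show ?thesis by (simp add: S_def linear_scale[OF bounded_linear.linear[OF bl_Rp]])
qed

lemma norm_S: "norm (S x) \<le> 2 * norm x"
proof -
  have "norm (S x) \<le> (\<Sum>p. norm ((R ^^ p) x))" unfolding S_def by (rule summable_norm[OF summable_Rp_norm])
  also have "\<dots> \<le> (\<Sum>p. (1/2::real)^p * norm x)"
    by (intro suminf_le summable_Rp_norm norm_Rp summable_mult2 summable_geometric) simp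
  also have "\<dots> = (\<Sum>p. (1/2::real)^p) * norm x"
    by (rule suminf_mult2[symmetric]) (simp add: summable_geometric)
  also have "\<dots> = 2 * norm x" using suminf_geometric[of "1/2::real"] by simp
  finally show ?thesis .
qed

lemma bl_S: "bounded_linear S"
proof (rule bounded_linear_intro[where K = 2])
  fix x show "norm (S x) \<le> norm x * 2" using norm_S[of x] by simp
qed (auto simp: S_add S_scale)

lemma S_eq: "S x - R (S x) = x"
proof -
  have "R (S x) = (\<Sum>p. R ((R ^^ p) x))"
    unfolding S_def by (rule bounded_linear.suminf[OF bl_R summable_Rp])
  also have "\<dots> = (\<Sum>p. (R ^^ Suc p) x)" by simp
  also have "\<dots> = S x - (R ^^ 0) x" unfolding S_def by (rule suminf_split_head[OF summable_Rp])
  finally show ?thesis by simp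
qed

lemma expansion: "(\<lambda>k. coef y k *\<^sub>R v k) sums (y - R y)"
proof -
  have 1: "(\<lambda>k. coef y k *\<^sub>R e k) sums y" using P_conv[of y] by (simp add: sums_def P_def)
  have 2: "(\<lambda>k. coef y k *\<^sub>R (e k - v k)) sums R y"
    unfolding R_def by (rule summable_sums[OF summable_Rterm'])
  show ?thesis using sums_diff[OF 1 2] by (simp add: algebra_simps)
qed

end

context fdata
begin

definition ell :: "nat \<Rightarrow> nat" where "ell k = N k * L k"
definition st :: "nat \<Rightarrow> nat" where "st k = (\<Sum>i<k. ell i)"

lemma ell_pos: "ell k \<ge> 1"
  using N_pos[of k] L_pos[of k] by (simp add: ell_def)

lemma st_Suc: "st (Suc k) = st k + ell k" by (simp add: st_def)

lemma st_0: "st 0 = 0" by (simp add: st_def)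

lemma st_mono: "k \<le> k' \<Longrightarrow> st k \<le> st k'"
  unfolding st_def by (rule sum_mono2) auto

lemma st_ge: "k \<le> st k"
proof (induction k)
  case 0 then show ?case by simp
next
  case (Suc k) then show ?case using ell_pos[of k] by (simp add: st_Suc)
qed

definition blk :: "nat \<Rightarrow> nat" where "blk j = (LEAST k. j < st (Suc k))"

lemma blk_upper: "j < st (Suc (blk j))"
proof -
  have "j < st (Suc j)" using st_ge[of "Suc j"] by simp
  then show ?thesis unfolding blk_def by (rule LeastI)
qed

lemma blk_lower: "st (blk j) \<le> j"
proof (cases "blk j")
  case 0 then show ?thesis by (simp add: st_0)
next
  case (Suc k)
  then have "k < blk j" by simp
  then have "\<not> j < st (Suc k)" unfolding blk_def by (rule not_less_Least)
  then show ?thesis using Suc by simp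
qed

lemma blk_eq: assumes "st k \<le> j" "j < st (Suc k)" shows "blk j = k"
proof -
  have le: "blk j \<le> k" unfolding blk_def by (rule Least_le) (rule assms(2))
  show ?thesis
  proof (rule ccontr)
    assume "blk j \<noteq> k"
    then have "Suc (blk j) \<le> k" using le by simp
    then have "st (Suc (blk j)) \<le> st k" by (rule st_mono)
    then show False using blk_upper[of j] assms(1) by simp
  qed
qed

lemma blk_ge: assumes "st K \<le> j" shows "K \<le> blk j"
proof (rule ccontr)
  assume "\<not> K \<le> blk j"
  then have "Suc (blk j) \<le> K" by simp
  then have "st (Suc (blk j)) \<le> st K" by (rule st_mono)
  then show False using blk_upper[of j] assms by simp
qed

definition idx :: "nat \<Rightarrow> nat" where "idx j = (j - st (blk j)) mod L (blk j)"

definition tm :: "'a \<Rightarrow> nat \<Rightarrow> 'a" where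
  "tm y j = (a (blk j) (idx j) / N (blk j) * coef y (blk j)) *\<^sub>R d (blk j) (idx j)"

definition bp :: "nat \<Rightarrow> nat \<Rightarrow> 'a" where
  "bp k p = (\<Sum>r<p. (a k (r mod L k) / N k) *\<^sub>R d k (r mod L k))"

lemma bp_add: "bp k (q * L k + m) = bp k (q * L k) + (\<Sum>r<m. (a k (r mod L k) / N k) *\<^sub>R d k (r mod L k))"
  if "m \<le> L k"
proof -
  have "bp k (q * L k + m) = bp k (q * L k) + (\<Sum>r<m. (a k ((q * L k + r) mod L k) / N k) *\<^sub>R d k ((q * L k + r) mod L k))"
    unfolding bp_def by (rule sum_lessThan_add)
  also have "(\<Sum>r<m. (a k ((q * L k + r) mod L k) / N k) *\<^sub>R d k ((q * L k + r) mod L k))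
      = (\<Sum>r<m. (a k (r mod L k) / N k) *\<^sub>R d k (r mod L k))"
    by (rule sum.cong) (simp_all add: mod_add_left_eq[symmetric])
  finally show ?thesis .
qed

lemma bp_full_block: "(\<Sum>r<L k. (a k (r mod L k) / N k) *\<^sub>R d k (r mod L k)) = (1 / N k) *\<^sub>R v k"
proof -
  have "(\<Sum>r<L k. (a k (r mod L k) / N k) *\<^sub>R d k (r mod L k)) = (\<Sum>r<L k. (1 / N k) *\<^sub>R (a k r *\<^sub>R d k r))"
    by (rule sum.cong) simp_all
  also have "\<dots> = (1 / N k) *\<^sub>R v k" by (simp add: v_eq scaleR_sum_right)
  finally show ?thesis .
qed

lemma bp_blocks: "bp k (q * L k) = (real q / N k) *\<^sub>R v k"
proof (induction q)
  case 0 then show ?case by (simp add: bp_def)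
next
  case (Suc q)
  have "bp k (Suc q * L k) = bp k (q * L k + L k)" by (simp add: add.commute)
  also have "\<dots> = (real q / N k) *\<^sub>R v k + (1 / N k) *\<^sub>R v k"
    using bp_add[of "L k" k q] Suc bp_full_block by simp
  also have "\<dots> = (real (Suc q) / N k) *\<^sub>R v k" by (simp add: scaleR_add_left[symmetric] add_divide_distrib)
  finally show ?case .
qed

lemma bp_formula: "m \<le> L k \<Longrightarrow>
  bp k (q * L k + m) = (real q / N k) *\<^sub>R v k + (1 / N k) *\<^sub>R (\<Sum>i<m. a k i *\<^sub>R d k i)"
proof -
  assume m: "m \<le> L k"
  have "(\<Sum>r<m. (a k (r mod L k) / N k) *\<^sub>R d k (r mod L k)) = (\<Sum>r<m. (1 / N k) *\<^sub>R (a k r *\<^sub>R d k r))"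
    by (rule sum.cong) (use m in auto)
  then show ?thesis using bp_add[OF m, of q] bp_blocks[of k q] by (simp add: scaleR_sum_right)
qed

lemma bp_ell: "bp k (ell k) = v k"
  using bp_formula[of 0 k "N k"] N_pos[of k] by (simp add: ell_def)

lemma tm_block: "r < ell K \<Longrightarrow> tm y (st K + r) = coef y K *\<^sub>R ((a K (r mod L K) / N K) *\<^sub>R d K (r mod L K))"
proof -
  assume r: "r < ell K"
  have "blk (st K + r) = K" by (rule blk_eq) (use r in \<open>simp_all add: st_Suc\<close>)
  then show ?thesis by (simp add: tm_def idx_def mult.commute)
qed

lemma block_partial: "p \<le> ell K \<Longrightarrow> (\<Sum>r<p. tm y (st K + r)) = coef y K *\<^sub>R bp K p"
  unfolding bp_def scaleR_sum_right by (rule sum.cong) (simp_all add: tm_block)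

lemma blocks_sum: "(\<Sum>j<st K. tm y j) = (\<Sum>k<K. coef y k *\<^sub>R v k)"
proof (induction K)
  case 0 then show ?case by (simp add: st_0)
next
  case (Suc K)
  have "(\<Sum>j<st (Suc K). tm y j) = (\<Sum>j<st K. tm y j) + (\<Sum>r<ell K. tm y (st K + r))"
    unfolding st_Suc by (rule sum_lessThan_add)
  also have "\<dots> = (\<Sum>k<K. coef y k *\<^sub>R v k) + coef y K *\<^sub>R v K"
    using Suc block_partial[of "ell K" K y] bp_ell[of K] by simp
  finally show ?case by simp
qed

lemma partial_sum: "p \<le> ell K \<Longrightarrow> (\<Sum>j<st K + p. tm y j) = (\<Sum>k<K. coef y k *\<^sub>R v k) + coef y K *\<^sub>R bp K p"
  using sum_lessThan_add[where f="tm y" and m="st K" and n=p] blocks_sum[where K=K and y=y] block_partial[where p=p and K=K and y=y] by simp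

end

lemma labs_err: fixes A A' T E W :: "'a::banach_lattice"
  shows "labs (A - T - t *\<^sub>R (A - A' - E) - s *\<^sub>R W)
    \<le> labs A + labs T + \<bar>t\<bar> *\<^sub>R (labs A + labs A' + labs E) + \<bar>s\<bar> *\<^sub>R labs W"
proof -
  have 1: "labs (A - A' - E) \<le> labs A + labs A' + labs E"
    using order_trans[OF labs_diff_triangle[of "A - A'" E] add_right_mono[OF labs_diff_triangle[of A A']]]
    by simp
  have "labs (A - T - t *\<^sub>R (A - A' - E) - s *\<^sub>R W)
      \<le> labs (A - T - t *\<^sub>R (A - A' - E)) + labs (s *\<^sub>R W)" by (rule labs_diff_triangle)
  also have "\<dots> \<le> (labs (A - T) + labs (t *\<^sub>R (A - A' - E))) + labs (s *\<^sub>R W)"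
    by (intro add_right_mono labs_diff_triangle)
  also have "\<dots> \<le> ((labs A + labs T) + \<bar>t\<bar> *\<^sub>R (labs A + labs A' + labs E)) + \<bar>s\<bar> *\<^sub>R labs W"
    unfolding labs_scale
    by (intro add_mono labs_diff_triangle scaleR_left_mono 1 order_refl) simp
  finally show ?thesis by (simp add: add.assoc)
qed

lemma scale_le_self: fixes Z :: "'a::banach_lattice"
  assumes "0 \<le> Z" "\<bar>t\<bar> \<le> 1" shows "\<bar>t\<bar> *\<^sub>R Z \<le> Z"
  using scaleR_right_mono[OF assms(2) assms(1)] by simp

context fdata
begin

definition g :: "'a \<Rightarrow> nat \<Rightarrow> 'a" where
  "g y K = labs (tR y K) + labs (coef y K *\<^sub>R (e K - v K)) + (\<bar>coef y K\<bar> / N K) *\<^sub>R Bk K"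

lemma g_nonneg: "0 \<le> g y K"
  unfolding g_def
  by (intro add_nonneg_nonneg labs_nonneg scaleR_nonneg_nonneg Bk_nonneg) simp

lemma norm_g: "norm (g y K) \<le> 3 * (1/4)^K * norm y"
proof -
  have a: "norm (labs (tR y K)) \<le> (1/4)^K * norm y" using norm_tR[of y K] by simp
  have b: "norm (labs (coef y K *\<^sub>R (e K - v K))) \<le> (1/4)^K * norm y"
  proof -
    have "norm (labs (coef y K *\<^sub>R (e K - v K))) \<le> rho K * norm y" using term_bd[of y K] by simp
    also have "\<dots> \<le> (1/4)^(Suc K) * norm y" by (intro mult_right_mono rho_le) simp
    also have "\<dots> \<le> (1/4)^K * norm y" by (intro mult_right_mono) simp_all
    finally show ?thesis .
  qed
  have c: "norm ((\<bar>coef y K\<bar> / N K) *\<^sub>R Bk K) \<le> (1/4)^K * norm y"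
  proof -
    have Np: "real (N K) > 0" using N_pos[of K] by simp
    have "norm ((\<bar>coef y K\<bar> / N K) *\<^sub>R Bk K) = \<bar>coef y K\<bar> * norm (Bk K) / N K" by simp
    also have "\<dots> \<le> (C K * norm y) * norm (Bk K) / N K"
      by (intro divide_right_mono mult_right_mono C_bd) simp_all
    also have "\<dots> = (C K * norm (Bk K)) * norm y / N K" by simp
    also have "\<dots> \<le> (real (N K) * (1/4)^K) * norm y / N K"
      using N_big[of K] unfolding Bk_def[symmetric]
      by (intro divide_right_mono mult_right_mono) simp_all
    also have "\<dots> = (1/4)^K * norm y" using Np by simp
    finally show ?thesis .
  qed
  have "norm (g y K) \<le> norm (labs (tR y K)) + norm (labs (coef y K *\<^sub>R (e K - v K))) + norm ((\<bar>coef y K\<bar> / N K) *\<^sub>R Bk K)"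
    unfolding g_def by (intro order_trans[OF norm_triangle_ineq] add_mono norm_triangle_ineq order_refl)
  also have "\<dots> \<le> 3 * (1/4)^K * norm y" using a b c by simp
  finally show ?thesis .
qed

lemma err_bound:
  "labs ((y - R y) - (\<Sum>j<n. tm y j))
     \<le> 2 *\<^sub>R labs (y - P (blk n) y) + labs (y - P (Suc (blk n)) y) + g y (blk n)"
proof -
  define K where "K = blk n"
  define p where "p = n - st K"
  have n: "n = st K + p" using blk_lower[of n] unfolding p_def K_def by simp
  have pl: "p < ell K" using blk_upper[of n] blk_lower[of n] unfolding p_def K_def by (simp add: st_Suc less_diff_conv2)
  define q where "q = p div L K"
  define m where "m = p mod L K"
  have Lp: "L K > 0" using L_pos[of K] by simp
  have pq: "p = q * L K + m" unfolding q_def m_def by simp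
  have mL: "m \<le> L K" using Lp unfolding m_def by (simp add: order.strict_implies_order)
  have qN: "q < N K"
  proof -
    have "p < N K * L K" using pl by (simp add: ell_def)
    then show ?thesis unfolding q_def using Lp by (simp add: div_less_iff_less_mult)
  qed
  define t where "t = real q / N K"
  have t1: "\<bar>t\<bar> \<le> 1" using qN unfolding t_def by simp
  define W where "W = (\<Sum>i<m. a K i *\<^sub>R d K i)"
  define c where "c = coef y K"
  define A where "A = y - P K y"
  define A' where "A' = y - P (Suc K) y"
  define E where "E = c *\<^sub>R (e K - v K)"
  define T where "T = tR y K"
  have ps: "(\<Sum>j<n. tm y j) = (\<Sum>k<K. coef y k *\<^sub>R v k) + c *\<^sub>R (t *\<^sub>R v K + (1 / N K) *\<^sub>R W)"
    unfolding n c_def t_def W_def using partial_sum[of p K y] pl bp_formula[OF mL, of q] pq by simp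
  have sv: "(\<Sum>k<K. coef y k *\<^sub>R v k) = P K y - (\<Sum>k<K. coef y k *\<^sub>R (e k - v k))"
    by (simp add: P_def scaleR_diff_right sum_subtractf)
  have cv: "c *\<^sub>R v K = A - A' - E"
    unfolding A_def A'_def E_def c_def by (simp add: P_Suc scaleR_diff_right)
  have err: "(y - R y) - (\<Sum>j<n. tm y j) = A - T - t *\<^sub>R (A - A' - E) - (c / N K) *\<^sub>R W"
  proof -
    have "c *\<^sub>R (t *\<^sub>R v K + (1 / N K) *\<^sub>R W) = t *\<^sub>R (c *\<^sub>R v K) + (c / N K) *\<^sub>R W"
      by (simp add: scaleR_add_right)
    then show ?thesis unfolding ps sv cv
      using tR_split[of y K] unfolding A_def T_def by (simp add: algebra_simps)
  qed
  have "labs ((y - R y) - (\<Sum>j<n. tm y j))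
      \<le> labs A + labs T + \<bar>t\<bar> *\<^sub>R (labs A + labs A' + labs E) + \<bar>c / N K\<bar> *\<^sub>R labs W"
    unfolding err by (rule labs_err)
  also have "\<dots> \<le> labs A + labs T + (labs A + labs A' + labs E) + (\<bar>c\<bar> / N K) *\<^sub>R Bk K"
  proof (intro add_mono order_refl scale_le_self t1)
    show "0 \<le> labs A + labs A' + labs E" by (intro add_nonneg_nonneg labs_nonneg)
    show "\<bar>c / N K\<bar> *\<^sub>R labs W \<le> (\<bar>c\<bar> / N K) *\<^sub>R Bk K"
      unfolding W_def by (simp add: scaleR_left_mono Bk_ge[OF mL])
  qed
  also have "\<dots> = 2 *\<^sub>R labs A + labs A' + g y K"
    unfolding g_def T_def E_def c_def by (simp add: scaleR_2 algebra_simps)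
  finally show ?thesis unfolding K_def A_def A'_def .
qed

end

context fdata
begin

lemma core:
  assumes bib: "\<And>y. u_conv (\<lambda>n. P n y) y"
  shows "u_conv (\<lambda>n. \<Sum>j<n. tm y j) (y - R y)"
proof -
  obtain wy where wy0: "0 \<le> wy" and wy: "\<And>\<epsilon>. \<epsilon> > 0 \<Longrightarrow> \<exists>N. \<forall>n\<ge>N. labs (y - P n y) \<le> \<epsilon> *\<^sub>R wy"
    using bib[of y] unfolding u_conv_def by blast
  have bd: "norm ((2::real)^K *\<^sub>R g y K) \<le> 3 * norm y * (1/2)^K" for K
  proof -
    have "norm ((2::real)^K *\<^sub>R g y K) = 2^K * norm (g y K)" by simp
    also have "\<dots> \<le> 2^K * (3 * (1/4)^K * norm y)" by (intro mult_left_mono norm_g) simp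
    also have "\<dots> = 3 * norm y * ((2^K) * (1/4)^K)" by simp
    also have "(2::real)^K * (1/4)^K = (1/2)^K" by (simp add: power_mult_distrib[symmetric])
    finally show ?thesis by simp
  qed
  have sm: "summable (\<lambda>K. (2::real)^K *\<^sub>R g y K)"
  proof (rule summable_norm_cancel, rule summable_comparison_test'[where g = "\<lambda>K. 3 * norm y * (1/2)^K"])
    show "summable (\<lambda>K. 3 * norm y * (1/2::real)^K)" by (intro summable_mult summable_geometric) simp
    fix K show "norm (norm ((2::real)^K *\<^sub>R g y K)) \<le> 3 * norm y * (1/2)^K" using bd[of K] by simp
  qed
  define w2 where "w2 = (\<Sum>K. (2::real)^K *\<^sub>R g y K)"
  have le2: "(2::real)^K *\<^sub>R g y K \<le> w2" for K
    unfolding w2_def by (rule pos_le_suminf[OF _ sm]) (intro scaleR_nonneg_nonneg g_nonneg; simp)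
  have gle: "g y K \<le> (1/2)^K *\<^sub>R w2" for K
  proof -
    have "(1/2::real)^K *\<^sub>R ((2::real)^K *\<^sub>R g y K) \<le> (1/2)^K *\<^sub>R w2"
      by (intro scaleR_left_mono le2) simp
    then show ?thesis by (simp add: power_mult_distrib[symmetric])
  qed
  have w20: "0 \<le> w2" using g_nonneg[of y 0] le2[of 0] by simp
  define w where "w = 3 *\<^sub>R wy + w2"
  have w0: "0 \<le> w" unfolding w_def by (intro add_nonneg_nonneg scaleR_nonneg_nonneg wy0 w20) simp
  have "\<exists>M. \<forall>n\<ge>M. labs ((y - R y) - (\<Sum>j<n. tm y j)) \<le> \<epsilon> *\<^sub>R w" if \<epsilon>: "\<epsilon> > 0" for \<epsilon>
  proof -
    obtain N0 where N0: "\<And>n. n \<ge> N0 \<Longrightarrow> labs (y - P n y) \<le> \<epsilon> *\<^sub>R wy" using wy[OF \<epsilon>] by blast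
    obtain K0 where K0: "(1/2::real)^K0 < \<epsilon>" using real_arch_pow_inv[OF \<epsilon>, of "1/2"] by auto
    define Kb where "Kb = max N0 K0"
    have "labs ((y - R y) - (\<Sum>j<n. tm y j)) \<le> \<epsilon> *\<^sub>R w" if n: "n \<ge> st Kb" for n
    proof -
      define K where "K = blk n"
      have KK: "Kb \<le> K" unfolding K_def by (rule blk_ge[OF n])
      have a1: "labs (y - P K y) \<le> \<epsilon> *\<^sub>R wy" using KK by (intro N0) (simp add: Kb_def)
      have a2: "labs (y - P (Suc K) y) \<le> \<epsilon> *\<^sub>R wy" using KK by (intro N0) (simp add: Kb_def)
      have pk: "(1/2::real)^K \<le> \<epsilon>"
      proof -
        have "K0 \<le> K" using KK by (simp add: Kb_def)
        then have "(1/2::real)^K \<le> (1/2)^K0" by (rule power_decreasing) simp_all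
        then show ?thesis using K0 by linarith
      qed
      have a3: "g y K \<le> \<epsilon> *\<^sub>R w2"
        using order_trans[OF gle[of K] scaleR_right_mono[OF pk w20]] .
      have "labs ((y - R y) - (\<Sum>j<n. tm y j)) \<le> 2 *\<^sub>R labs (y - P K y) + labs (y - P (Suc K) y) + g y K"
        unfolding K_def by (rule err_bound)
      also have "\<dots> \<le> 2 *\<^sub>R (\<epsilon> *\<^sub>R wy) + \<epsilon> *\<^sub>R wy + \<epsilon> *\<^sub>R w2"
        by (intro add_mono scaleR_left_mono a1 a2 a3) simp
      also have "\<dots> = \<epsilon> *\<^sub>R w"
      proof -
        have "2 *\<^sub>R (\<epsilon> *\<^sub>R wy) + \<epsilon> *\<^sub>R wy = (2 * \<epsilon> + \<epsilon>) *\<^sub>R wy" by (simp only: scaleR_scaleR scaleR_add_left)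
        also have "(2 * \<epsilon> + \<epsilon>) = \<epsilon> * 3" by simp
        finally show ?thesis unfolding w_def by (simp add: scaleR_add_right)
      qed
      finally show ?thesis .
    qed
    then show ?thesis by blast
  qed
  then show ?thesis unfolding u_conv_def using w0 by blast
qed

lemma frame:
  assumes bib: "\<And>y. u_conv (\<lambda>n. P n y) y"
  shows "u_frame (\<lambda>j. d (blk j) (idx j)) (\<lambda>j x. a (blk j) (idx j) / N (blk j) * coef (S x) (blk j))"
proof -
  have eq: "(\<Sum>j<n. (a (blk j) (idx j) / N (blk j) * coef (S x) (blk j)) *\<^sub>R d (blk j) (idx j)) = (\<Sum>j<n. tm (S x) j)" for n x
    by (simp add: tm_def)
  have uc: "u_conv (\<lambda>n. \<Sum>j<n. (a (blk j) (idx j) / N (blk j) * coef (S x) (blk j)) *\<^sub>R d (blk j) (idx j)) x" for x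
    unfolding eq using core[OF bib, of "S x"] S_eq[of x] by simp
  have bl: "bounded_linear (\<lambda>x. a (blk j) (idx j) / N (blk j) * coef (S x) (blk j))" for j
    by (rule bounded_linear_compose[OF bounded_linear_mult_right bounded_linear_compose[OF bounded_linear_coef bl_S]])
  show ?thesis unfolding u_frame_def schauder_frame_def using uc bl u_conv_tendsto by blast
qed

end

lemma span_repr:
  fixes D :: "'a::real_vector set"
  assumes "v \<in> span D" "d0 \<in> D"
  shows "\<exists>(L::nat) a d. L \<ge> 1 \<and> (\<forall>i. d i \<in> D) \<and> v = (\<Sum>i<L. a i *\<^sub>R d i)"
proof -
  obtain T u where T: "finite T" "T \<subseteq> D" "v = (\<Sum>x\<in>T. u x *\<^sub>R x)"
    using assms(1) unfolding span_explicit by blast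
  obtain h where h: "bij_betw h {0..<card T} T" using ex_bij_betw_nat_finite[OF T(1)] by blast
  define d where "d i = (if i < card T then h i else d0)" for i
  define a where "a i = (if i < card T then u (h i) else 0)" for i
  have "(\<Sum>i<card T + 1. a i *\<^sub>R d i) = (\<Sum>i<card T. a i *\<^sub>R d i)" by (simp add: a_def)
  also have "\<dots> = (\<Sum>i\<in>{0..<card T}. u (h i) *\<^sub>R h i)"
    by (simp add: a_def d_def atLeast0LessThan)
  also have "\<dots> = v" unfolding T(3) by (rule sum.reindex_bij_betw[OF h])
  finally have vf: "v = (\<Sum>i<card T + 1. a i *\<^sub>R d i)" ..
  have dD: "\<forall>i. d i \<in> D"
    using h T(2) assms(2) unfolding d_def bij_betw_def by auto
  have "1 \<le> card T + 1 \<and> (\<forall>i. d i \<in> D) \<and> v = (\<Sum>i<card T + 1. a i *\<^sub>R d i)"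
    using vf dD by simp
  then show ?thesis by (intro exI)
qed

theorem theorem4p4:
  fixes D :: "'a::banach_lattice set"
  assumes "\<exists>e::nat \<Rightarrow> 'a. bibasis e"
    and "closure (span D) = UNIV"
  shows "\<exists>xs f. u_frame xs f \<and> (\<forall>j. xs j \<in> D)"
proof -
  obtain e :: "nat \<Rightarrow> 'a" where bib: "bibasis e" using assms(1) by blast
  then have sbe: "schauder_basis e" by (simp add: bibasis_def)
  interpret B: sbasis e by unfold_locales (rule sbe)
  have ucP: "u_conv (\<lambda>n. B.P n y) y" for y
  proof -
    have "(\<lambda>n. \<Sum>j<n. B.coef y j *\<^sub>R e j) \<longlonglongrightarrow> y" using B.P_conv[of y] by (simp add: B.P_def)
    then have "u_conv (\<lambda>n. \<Sum>j<n. B.coef y j *\<^sub>R e j) y" using bib unfolding bibasis_def by blast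
    then show ?thesis by (simp add: B.P_def)
  qed
  obtain C where Cp: "\<And>j. C j > 0" and Cb: "\<And>j x. \<bar>B.coef x j\<bar> \<le> C j * norm x"
    using B.coef_bound by blast
  obtain d0 where d0: "d0 \<in> D"
  proof (cases "D = {}")
    case True
    then have "closure (span D) = {0}" by simp
    then have "e 0 = 0" using assms(2) by (metis UNIV_I singletonD)
    then show ?thesis using B.e_nonzero by blast
  next
    case False then show ?thesis using that by blast
  qed
  have approx: "\<exists>(Lk::nat) ak dk. Lk \<ge> 1 \<and> (\<forall>i. dk i \<in> D) \<and>
      C k * norm (e k - (\<Sum>i<Lk. ak i *\<^sub>R dk i)) \<le> (1/4)^(Suc k)" for k
  proof -
    define \<delta> where "\<delta> = (1/4::real)^(Suc k) / C k"
    have \<delta>: "\<delta> > 0" using Cp[of k] by (simp add: \<delta>_def)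
    have "e k \<in> closure (span D)" using assms(2) by simp
    then obtain y where y: "y \<in> span D" "dist y (e k) < \<delta>"
      unfolding closure_approachable using \<delta> by blast
    obtain Lk ak dk where r: "(Lk::nat) \<ge> 1" "\<forall>i. dk i \<in> D" "y = (\<Sum>i<Lk. ak i *\<^sub>R dk i)"
      using span_repr[OF y(1) d0] by blast
    have "norm (e k - y) < \<delta>" using y(2) by (simp add: dist_norm norm_minus_commute)
    then have "C k * norm (e k - y) \<le> (1/4)^(Suc k)"
      using Cp[of k] unfolding \<delta>_def by (simp add: field_simps)
    then show ?thesis using r by blast
  qed
  obtain L a d where LAD: "\<And>k. (L k::nat) \<ge> 1 \<and> (\<forall>i. d k i \<in> D) \<and>
      C k * norm (e k - (\<Sum>i<L k. a k i *\<^sub>R d k i)) \<le> (1/4)^(Suc k)"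
    using approx by metis
  define v where "v k = (\<Sum>i<L k. a k i *\<^sub>R d k i)" for k
  define N where "N k = nat \<lceil>C k * norm (\<Sum>i<L k. \<bar>a k i\<bar> *\<^sub>R labs (d k i)) * 4^k\<rceil> + 1" for k
  have Nb: "C k * norm (\<Sum>i<L k. \<bar>a k i\<bar> *\<^sub>R labs (d k i)) \<le> real (N k) * (1/4)^k" for k
  proof -
    define X where "X = C k * norm (\<Sum>i<L k. \<bar>a k i\<bar> *\<^sub>R labs (d k i))"
    have "X * 4^k \<le> real (N k)" unfolding N_def X_def by linarith
    then have "X * 4^k * (1/4)^k \<le> real (N k) * (1/4)^k" by (intro mult_right_mono) simp_all
    moreover have "X * 4^k * (1/4)^k = X" by (simp add: power_one_over)
    ultimately show ?thesis unfolding X_def by simp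
  qed
  interpret F: fdata e C v L a d N
  proof unfold_locales
    show "\<And>k. 0 < C k" by (rule Cp)
    show "\<And>x k. \<bar>B.coef x k\<bar> \<le> C k * norm x" by (rule Cb)
    show "\<And>k. 1 \<le> L k" using LAD by blast
    show "\<And>k. 1 \<le> N k" by (simp add: N_def)
    show "\<And>k. v k = (\<Sum>i<L k. a k i *\<^sub>R d k i)" by (simp add: v_def)
    show "\<And>k. C k * norm (e k - v k) \<le> (1/4)^(Suc k)" unfolding v_def using LAD by blast
    show "\<And>k. C k * norm (\<Sum>i<L k. \<bar>a k i\<bar> *\<^sub>R labs (d k i)) \<le> real (N k) * (1/4)^k" by (rule Nb)
  qed
  have "u_frame (\<lambda>j. d (F.blk j) (F.idx j)) (\<lambda>j x. a (F.blk j) (F.idx j) / N (F.blk j) * B.coef (F.S x) (F.blk j))"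
    by (rule F.frame) (rule ucP)
  moreover have "\<forall>j. d (F.blk j) (F.idx j) \<in> D" using LAD by blast
  ultimately show ?thesis by blast
qed

end
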